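(* Let $G$ be an infinite group and let $k$ be a field. Then for every integer $n\ge1$ the following are equivalent: (i) every stably injective $\tau\in\mathrm{LNUCA}_c(G,k^n)$ is surjective; (ii) the ring $\mathrm{LNUCA}_c(G,k^n)$ is directly finite; (iii) the ring $M_n(D^1(k[G]))$ is directly finite.
   Context: For $V=k^n$, $g\in G$, $x\in V^G$: $(gx)(h)=x(g^{-1}h)$. For finite $M\subset G$, $S=\mathcal{L}(V^M,V)$, $s\in S^G$: $\sigma_s(x)(g)=s(g)((g^{-1}x)\vert_M)$. $\mathrm{LNUCA}_c(G,V)$ is the set of $\sigma_s$ with $M$ finite and $s$ constant outside a finite subset of $G$; it is a ring with pointwise addition and composition. $\Sigma(s)$ is the closure of $\{gs:g\in G\}$ in $S^G$ (prodiscrete topology); $\sigma_s$ is stably injective if $\sigma_p$ is injective for all $p\in\Sigma(s)$. A ring is directly finite if $ab=1$ implies $ba=1$. $D^1(k[G])=k[G]\times(k[G])[G]$ ($(k[G])[G]$ = finitely supported maps $G\to k[G]$) with componentwise addition and multiplication $(\alpha_1,\beta_1)*(\alpha_2,\beta_2)=(\alpha_1\alpha_2,\alpha_1\beta_2+\beta_1\alpha_2+\beta_1\beta_2)$, where $\alpha_1\alpha_2$ is the group ring product and $(\alpha\beta)(g)(h)=\sum_t\alpha(t)\beta(gt)(t^{-1}h)$, $(\beta\alpha)(g)(h)=\sum_t\beta(g)(t)\alpha(t^{-1}h)$, $(\beta\gamma)(g)(h)=\sum_t\beta(g)(t)\gamma(gt)(t^{-1}h)$. *)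

theory Defs
  imports Main "HOL-Library.Groups_Big_Fun"
begin

text \<open>The group G is a type 'g of class group_add (group operation
written +, identity 0, inverse uminus; no commutativity assumed). V = k^n is the type 'n => 'k for a finite index type 'n
(n = CARD('n) >= 1). Configurations x in V^G have type 'g => 'n => 'k.
A linear map V^M -> V (M finite subset of G) is represented by a k-linear map
phi : V^G -> V that depends only on the restriction to M.\<close>

definition cfg_linear :: "(('g \<Rightarrow> 'n \<Rightarrow> 'k::field) \<Rightarrow> ('n \<Rightarrow> 'k)) \<Rightarrow> bool" where
  "cfg_linear \<phi> \<longleftrightarrow>
     (\<forall>y z. \<phi> (\<lambda>h i. y h i + z h i) = (\<lambda>i. \<phi> y i + \<phi> z i)) \<and>
     (\<forall>c y. \<phi> (\<lambda>h i. c * y h i) = (\<lambda>i. c * \<phi> y i))"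

definition local_on :: "'g set \<Rightarrow> (('g \<Rightarrow> 'v) \<Rightarrow> 'w) \<Rightarrow> bool" where
  "local_on M \<phi> \<longleftrightarrow> (\<forall>y z. (\<forall>m\<in>M. y m = z m) \<longrightarrow> \<phi> y = \<phi> z)"

definition lin_S :: "'g set \<Rightarrow> ((('g \<Rightarrow> 'n \<Rightarrow> 'k::field) \<Rightarrow> ('n \<Rightarrow> 'k))) set" where
  "lin_S M = {\<phi>. cfg_linear \<phi> \<and> local_on M \<phi>}"

text \<open>sigma_s(x)(g) = s(g)((g^-1 x)|_M), where (g^-1 x)(h) = x(g h).\<close>
definition sigma :: "('g::group_add \<Rightarrow> ('g \<Rightarrow> 'v) \<Rightarrow> 'v) \<Rightarrow> ('g \<Rightarrow> 'v) \<Rightarrow> ('g \<Rightarrow> 'v)" where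
  "sigma s x = (\<lambda>g. s g (\<lambda>h. x (g + h)))"

definition lnuca_rule :: "('g::group_add \<Rightarrow> ('g \<Rightarrow> 'n \<Rightarrow> 'k::field) \<Rightarrow> ('n \<Rightarrow> 'k)) \<Rightarrow> bool" where
  "lnuca_rule s \<longleftrightarrow> (\<exists>M. finite M \<and> (\<forall>g. s g \<in> lin_S M) \<and>
        (\<exists>F c. finite F \<and> (\<forall>g. g \<notin> F \<longrightarrow> s g = c)))"

definition LNUCA_c :: "(('g::group_add \<Rightarrow> 'n \<Rightarrow> 'k::field) \<Rightarrow> ('g \<Rightarrow> 'n \<Rightarrow> 'k)) set" where
  "LNUCA_c = {sigma s | s. lnuca_rule s}"

text \<open>Sigma(s): closure of the orbit {g s} in S^G, (g s)(h) = s(g^-1 h), for the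
prodiscrete topology: p is in the closure iff every finite window of p agrees
with some translate of s.\<close>
definition orbit_closure :: "('g::group_add \<Rightarrow> 'a) \<Rightarrow> ('g \<Rightarrow> 'a) set" where
  "orbit_closure s = {p. \<forall>E. finite E \<longrightarrow> (\<exists>g. \<forall>h\<in>E. p h = s (- g + h))}"

definition stably_injective :: "(('g::group_add \<Rightarrow> 'n \<Rightarrow> 'k::field) \<Rightarrow> ('g \<Rightarrow> 'n \<Rightarrow> 'k)) \<Rightarrow> bool" where
  "stably_injective \<tau> \<longleftrightarrow>
     (\<exists>s. lnuca_rule s \<and> \<tau> = sigma s \<and> (\<forall>p\<in>orbit_closure s. inj (sigma p)))"

definition LNUCA_directly_finite :: "'g::group_add itself \<Rightarrow> 'n itself \<Rightarrow> 'k::field itself \<Rightarrow> bool" where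
  "LNUCA_directly_finite _ _ _ \<longleftrightarrow>
     (\<forall>a \<in> (LNUCA_c :: (('g \<Rightarrow> 'n \<Rightarrow> 'k) \<Rightarrow> _) set). \<forall>b \<in> LNUCA_c. a \<circ> b = id \<longrightarrow> b \<circ> a = id)"

definition fin_supp :: "('a \<Rightarrow> 'b::zero) \<Rightarrow> bool" where
  "fin_supp f \<longleftrightarrow> finite {x. f x \<noteq> 0}"

definition gr_mult :: "('g::group_add \<Rightarrow> 'k::field) \<Rightarrow> ('g \<Rightarrow> 'k) \<Rightarrow> ('g \<Rightarrow> 'k)" where
  "gr_mult a b = (\<lambda>h. Sum_any (\<lambda>t. a t * b (- t + h)))"

type_synonym ('g, 'k) D1 = "('g \<Rightarrow> 'k) \<times> ('g \<Rightarrow> 'g \<Rightarrow> 'k)"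

definition D1_carrier :: "('g, 'k::field) D1 set" where
  "D1_carrier = {(a, b). fin_supp a \<and> finite {g. b g \<noteq> (\<lambda>_. 0)} \<and> (\<forall>g. fin_supp (b g))}"

definition D1_add :: "('g, 'k::field) D1 \<Rightarrow> ('g, 'k) D1 \<Rightarrow> ('g, 'k) D1" where
  "D1_add x y = ((\<lambda>h. fst x h + fst y h), (\<lambda>g h. snd x g h + snd y g h))"

definition D1_mult :: "('g::group_add, 'k::field) D1 \<Rightarrow> ('g, 'k) D1 \<Rightarrow> ('g, 'k) D1" where
  "D1_mult x y = (case x of (a1, b1) \<Rightarrow> case y of (a2, b2) \<Rightarrow>
     (gr_mult a1 a2,
      \<lambda>g h. Sum_any (\<lambda>t. a1 t * b2 (g + t) (- t + h))
          + Sum_any (\<lambda>t. b1 g t * a2 (- t + h))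
          + Sum_any (\<lambda>t. b1 g t * b2 (g + t) (- t + h))))"

definition D1_zero :: "('g, 'k::field) D1" where
  "D1_zero = ((\<lambda>_. 0), (\<lambda>_ _. 0))"

definition D1_one :: "('g::group_add, 'k::field) D1" where
  "D1_one = ((\<lambda>h. if h = 0 then 1 else 0), (\<lambda>_ _. 0))"

definition D1_mat_mult ::
  "('n::finite \<Rightarrow> 'n \<Rightarrow> ('g::group_add, 'k::field) D1) \<Rightarrow> ('n \<Rightarrow> 'n \<Rightarrow> ('g, 'k) D1) \<Rightarrow> ('n \<Rightarrow> 'n \<Rightarrow> ('g, 'k) D1)" where
  "D1_mat_mult A B = (\<lambda>i j.
     ((\<lambda>h. \<Sum>l\<in>UNIV. fst (D1_mult (A i l) (B l j)) h),
      (\<lambda>g h. \<Sum>l\<in>UNIV. snd (D1_mult (A i l) (B l j)) g h)))"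

definition D1_mat_one :: "'n \<Rightarrow> 'n \<Rightarrow> ('g::group_add, 'k::field) D1" where
  "D1_mat_one = (\<lambda>i j. if i = j then D1_one else D1_zero)"

definition D1_mat_directly_finite :: "'g::group_add itself \<Rightarrow> 'n::finite itself \<Rightarrow> 'k::field itself \<Rightarrow> bool" where
  "D1_mat_directly_finite _ _ _ \<longleftrightarrow>
     (\<forall>A B :: 'n \<Rightarrow> 'n \<Rightarrow> ('g, 'k) D1.
        (\<forall>i j. A i j \<in> D1_carrier) \<longrightarrow> (\<forall>i j. B i j \<in> D1_carrier) \<longrightarrow>
        D1_mat_mult A B = D1_mat_one \<longrightarrow> D1_mat_mult B A = D1_mat_one)"

end

theory Submission
  imports Defs "HOL-Library.Function_Algebras" "HOL.Vector_Spaces"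
begin


definition ee :: "'g \<Rightarrow> 'n \<Rightarrow> 'g \<Rightarrow> 'n \<Rightarrow> 'k::field" where
  "ee t j = (\<lambda>h i. if h = t \<and> i = j then 1 else 0)"

definition slin :: "(('g \<Rightarrow> 'n \<Rightarrow> 'k::field) \<Rightarrow> 'k) \<Rightarrow> bool" where
  "slin L \<longleftrightarrow> (\<forall>x y. L (\<lambda>h i. x h i + y h i) = L x + L y) \<and> (\<forall>c x. L (\<lambda>h i. c * x h i) = c * L x)"

lemma local_onD: "local_on M \<phi> \<Longrightarrow> (\<And>m. m \<in> M \<Longrightarrow> y m = z m) \<Longrightarrow> \<phi> y = \<phi> z"
  unfolding local_on_def by blast

lemma fun_sum_apply: "(sum F A) x = sum (\<lambda>a. F a x) A"
  by (induction A rule: infinite_finite_induct) auto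

lemma slin_add: "slin L \<Longrightarrow> L (\<lambda>h i. x h i + y h i) = L x + L y"
  unfolding slin_def by blast

lemma slin_scale: "slin L \<Longrightarrow> L (\<lambda>h i. c * x h i) = c * L x"
  unfolding slin_def by blast

lemma slin_zero: "slin L \<Longrightarrow> L (\<lambda>h i. 0) = 0"
  using slin_scale[of L 0 "\<lambda>h i. 0"] by simp

lemma slin_sum:
  assumes "slin L" "finite A"
  shows "L (\<lambda>h i. \<Sum>a\<in>A. f a h i) = (\<Sum>a\<in>A. L (f a))"
  using assms(2)
proof (induction A rule: finite_induct)
  case empty then show ?case using slin_zero[OF assms(1)] by simp
next
  case (insert a A)
  have "L (\<lambda>h i. \<Sum>a\<in>insert a A. f a h i) = L (\<lambda>h i. f a h i + (\<Sum>a\<in>A. f a h i))"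
    using insert by simp
  also have "\<dots> = L (f a) + L (\<lambda>h i. \<Sum>a\<in>A. f a h i)"
    by (rule slin_add[OF assms(1)])
  finally show ?case using insert by simp
qed

lemma slin_rep:
  fixes L :: "('g \<Rightarrow> 'n::finite \<Rightarrow> 'k::field) \<Rightarrow> 'k"
  assumes "slin L" "local_on D L" "finite D"
  shows "L x = (\<Sum>p\<in>D \<times> UNIV. x (fst p) (snd p) * L (ee (fst p) (snd p)))"
proof -
  have "L x = L (\<lambda>h i. \<Sum>p\<in>D \<times> UNIV. x (fst p) (snd p) * ee (fst p) (snd p) h i)"
  proof -
    have "\<forall>m\<in>D. x m = (\<lambda>i. \<Sum>p\<in>D \<times> UNIV. x (fst p) (snd p) * ee (fst p) (snd p) m i)"
    proof (intro ballI ext)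
      fix m i assume m: "m \<in> D"
      have "(\<Sum>p\<in>D \<times> UNIV. x (fst p) (snd p) * ee (fst p) (snd p) m i)
          = (\<Sum>p\<in>D \<times> UNIV. if p = (m, i) then x m i else 0)"
        by (rule sum.cong) (auto simp: ee_def)
      also have "\<dots> = x m i" using m assms(3) by simp
      finally show "x m i = (\<Sum>p\<in>D \<times> UNIV. x (fst p) (snd p) * ee (fst p) (snd p) m i)" by simp
    qed
    then show ?thesis by (intro local_onD[OF assms(2)]) auto
  qed
  also have "\<dots> = (\<Sum>p\<in>D \<times> UNIV. L (\<lambda>h i. x (fst p) (snd p) * ee (fst p) (snd p) h i))"
    by (rule slin_sum[OF assms(1)]) (simp add: assms(3))
  also have "\<dots> = (\<Sum>p\<in>D \<times> UNIV. x (fst p) (snd p) * L (ee (fst p) (snd p)))"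
    by (simp add: slin_scale[OF assms(1)])
  finally show ?thesis .
qed

lemma slin_ee_out:
  assumes "slin L" "local_on D L" "t \<notin> D"
  shows "L (ee t j) = 0"
proof -
  have "\<forall>m\<in>D. ee t j m = (\<lambda>i. 0)" using assms(3) by (auto simp: ee_def fun_eq_iff)
  then have "L (ee t j) = L (\<lambda>h i. 0)" by (intro local_onD[OF assms(2)]) auto
  then show ?thesis using slin_zero[OF assms(1)] by simp
qed

lemma slin_rep_super:
  fixes L :: "('g \<Rightarrow> 'n::finite \<Rightarrow> 'k::field) \<Rightarrow> 'k"
  assumes "slin L" "local_on D L" "finite D" "D \<subseteq> D'" "finite D'"
  shows "L x = (\<Sum>p\<in>D' \<times> UNIV. x (fst p) (snd p) * L (ee (fst p) (snd p)))"
proof -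
  have "L x = (\<Sum>p\<in>D \<times> UNIV. x (fst p) (snd p) * L (ee (fst p) (snd p)))"
    by (rule slin_rep[OF assms(1-3)])
  also have "\<dots> = (\<Sum>p\<in>D' \<times> UNIV. x (fst p) (snd p) * L (ee (fst p) (snd p)))"
    using assms slin_ee_out[OF assms(1,2)] by (intro sum.mono_neutral_left) (auto, metis)
  finally show ?thesis .
qed

definition scf :: "'k::field \<Rightarrow> ('g \<Rightarrow> 'n \<Rightarrow> 'k) \<Rightarrow> ('g \<Rightarrow> 'n \<Rightarrow> 'k)" where
  "scf c f = (\<lambda>h i. c * f h i)"

lemma vs_scf: "vector_space (scf :: 'k::field \<Rightarrow> ('g \<Rightarrow> 'n \<Rightarrow> 'k) \<Rightarrow> _)"
  by unfold_locales (auto simp: scf_def fun_eq_iff algebra_simps)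

lemma vs_k: "vector_space ((*) :: 'k::field \<Rightarrow> 'k \<Rightarrow> 'k)"
  by unfold_locales (auto simp: algebra_simps)

lemma vsp: "vector_space_pair (scf :: 'k::field \<Rightarrow> ('g \<Rightarrow> 'n \<Rightarrow> 'k) \<Rightarrow> _) ((*) :: 'k \<Rightarrow> 'k \<Rightarrow> 'k)"
  unfolding vector_space_pair_def using vs_scf vs_k by blast

lemma separation:
  fixes L :: "'a \<Rightarrow> ('g \<Rightarrow> 'n::finite \<Rightarrow> 'k::field) \<Rightarrow> 'k" and D :: "'a \<Rightarrow> 'g set"
  assumes lin: "\<And>a. slin (L a)" and loc: "\<And>a. local_on (D a) (L a)" and fin: "\<And>a. finite (D a)"
    and inj: "\<And>x. (\<And>a. L a x = 0) \<Longrightarrow> x = (\<lambda>h i. 0)"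
  shows "\<exists>A c. finite A \<and> (\<forall>x. x h0 i0 = (\<Sum>a\<in>A. c a * L a x))"
proof -
  interpret V: vector_space "scf :: 'k \<Rightarrow> ('g \<Rightarrow> 'n \<Rightarrow> 'k) \<Rightarrow> _" by (rule vs_scf)
  interpret P: vector_space_pair "scf :: 'k \<Rightarrow> ('g \<Rightarrow> 'n \<Rightarrow> 'k) \<Rightarrow> _" "(*) :: 'k \<Rightarrow> 'k \<Rightarrow> 'k" by (rule vsp)
  define \<kappa> where "\<kappa> a = (\<lambda>t j. L a (ee t j))" for a
  have kapsum: "\<kappa> a = (\<Sum>p\<in>D a \<times> UNIV. scf (\<kappa> a (fst p) (snd p)) (ee (fst p) (snd p)))" for a
  proof (intro ext)
    fix h i
    have "(\<Sum>p\<in>D a \<times> UNIV. scf (\<kappa> a (fst p) (snd p)) (ee (fst p) (snd p))) h i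
        = (\<Sum>p\<in>D a \<times> UNIV. if p = (h, i) then \<kappa> a h i else 0)"
      by (simp add: fun_sum_apply scf_def ee_def) (rule sum.cong, auto)
    also have "\<dots> = \<kappa> a h i"
      using fin[of a] slin_ee_out[OF lin loc, of h a] by (auto simp: \<kappa>_def)
    finally show "\<kappa> a h i = (\<Sum>p\<in>D a \<times> UNIV. scf (\<kappa> a (fst p) (snd p)) (ee (fst p) (snd p))) h i" by simp
  qed
  have key: "L a (\<lambda>g j. f (ee g j)) = f (\<kappa> a)" if lf: "Vector_Spaces.linear scf (*) f" for f :: "('g \<Rightarrow> 'n \<Rightarrow> 'k) \<Rightarrow> 'k" and a
  proof -
    have "L a (\<lambda>g j. f (ee g j)) = (\<Sum>p\<in>D a \<times> UNIV. f (ee (fst p) (snd p)) * \<kappa> a (fst p) (snd p))"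
      unfolding \<kappa>_def by (rule slin_rep[OF lin loc fin])
    also have "\<dots> = f (\<Sum>p\<in>D a \<times> UNIV. scf (\<kappa> a (fst p) (snd p)) (ee (fst p) (snd p)))"
      by (simp add: P.linear_sum[OF lf] P.linear_scale[OF lf] mult.commute)
    also have "\<dots> = f (\<kappa> a)" using kapsum[of a] by simp
    finally show ?thesis .
  qed
  define \<delta> :: "'g \<Rightarrow> 'n \<Rightarrow> 'k" where "\<delta> = ee h0 i0"
  have inspan: "\<delta> \<in> V.span (range \<kappa>)"
  proof (rule ccontr)
    assume nin: "\<delta> \<notin> V.span (range \<kappa>)"
    obtain B0 where B0: "B0 \<subseteq> range \<kappa>" "V.independent B0" "range \<kappa> \<subseteq> V.span B0" "card B0 = V.dim (range \<kappa>)"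
      by (rule V.basis_exists)
    have sB0: "V.span B0 \<subseteq> V.span (range \<kappa>)" using B0(1) by (rule V.span_mono)
    have nin0: "\<delta> \<notin> V.span B0" using nin sB0 by blast
    have indB: "V.independent (insert \<delta> B0)" by (rule V.independent_insertI[OF nin0 B0(2)])
    define f where "f = P.construct (insert \<delta> B0) (\<lambda>b. if b = \<delta> then 1 else 0)"
    have lf: "Vector_Spaces.linear scf (*) f" unfolding f_def by (rule P.linear_construct[OF indB])
    have f\<delta>: "f \<delta> = 1" unfolding f_def using P.construct_basis[OF indB, of \<delta>] by simp
    have fB0: "f b = 0" if "b \<in> B0" for b
    proof -
      have "b \<noteq> \<delta>" using that nin0 V.span_base[of b B0] by blast
      then show ?thesis unfolding f_def using P.construct_basis[OF indB, of b] that by simp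
    qed
    have fk: "f (\<kappa> a) = 0" for a
    proof -
      have "\<kappa> a \<in> V.span B0" using B0(3) by (simp add: image_subset_iff)
      then show ?thesis using P.linear_eq_0_on_span[OF lf, of B0 "\<kappa> a"] fB0 by blast
    qed
    define x where "x = (\<lambda>g j. f (ee g j))"
    have "x = (\<lambda>h i. 0)"
      by (rule inj) (simp add: x_def key[OF lf] fk)
    moreover have "x h0 i0 = 1" using f\<delta> by (simp add: x_def \<delta>_def)
    ultimately show False by simp
  qed
  then obtain T r where T: "finite T" "T \<subseteq> range \<kappa>" "\<delta> = (\<Sum>v\<in>T. scf (r v) v)"
    unfolding V.span_explicit by blast
  define ix where "ix v = (SOME a. \<kappa> a = v)" for v
  have ix: "\<kappa> (ix v) = v" if "v \<in> T" for v
  proof -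
    have "\<exists>a. \<kappa> a = v" using T(2) that by blast
    then show ?thesis unfolding ix_def by (rule someI_ex)
  qed
  define D' where "D' = insert h0 (\<Union>v\<in>T. D (ix v))"
  have finD': "finite D'" using T(1) fin by (simp add: D'_def)
  show ?thesis
  proof (intro exI conjI allI)
    show "finite (ix ` T)" using T(1) by simp
    fix x :: "'g \<Rightarrow> 'n \<Rightarrow> 'k"
    have inj_ix: "inj_on ix T" by (metis ix inj_onI)
    have "(\<Sum>a\<in>ix ` T. r (\<kappa> a) * L a x) = (\<Sum>v\<in>T. r v * L (ix v) x)"
      by (simp add: sum.reindex[OF inj_ix] ix)
    also have "\<dots> = (\<Sum>v\<in>T. r v * (\<Sum>p\<in>D' \<times> UNIV. x (fst p) (snd p) * \<kappa> (ix v) (fst p) (snd p)))"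
    proof (rule sum.cong[OF refl])
      fix v assume "v \<in> T"
      then have "D (ix v) \<subseteq> D'" by (auto simp: D'_def)
      then show "r v * L (ix v) x = r v * (\<Sum>p\<in>D' \<times> UNIV. x (fst p) (snd p) * \<kappa> (ix v) (fst p) (snd p))"
        using slin_rep_super[OF lin loc fin _ finD'] by (simp add: \<kappa>_def)
    qed
    also have "\<dots> = (\<Sum>p\<in>D' \<times> UNIV. x (fst p) (snd p) * (\<Sum>v\<in>T. r v * \<kappa> (ix v) (fst p) (snd p)))"
    proof -
      have "(\<Sum>v\<in>T. r v * (\<Sum>p\<in>D' \<times> UNIV. x (fst p) (snd p) * \<kappa> (ix v) (fst p) (snd p)))
          = (\<Sum>v\<in>T. \<Sum>p\<in>D' \<times> UNIV. x (fst p) (snd p) * (r v * \<kappa> (ix v) (fst p) (snd p)))"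
        by (simp only: sum_distrib_left mult.left_commute)
      also have "\<dots> = (\<Sum>p\<in>D' \<times> UNIV. \<Sum>v\<in>T. x (fst p) (snd p) * (r v * \<kappa> (ix v) (fst p) (snd p)))"
        by (rule sum.swap)
      also have "\<dots> = (\<Sum>p\<in>D' \<times> UNIV. x (fst p) (snd p) * (\<Sum>v\<in>T. r v * \<kappa> (ix v) (fst p) (snd p)))"
        by (simp only: sum_distrib_left)
      finally show ?thesis .
    qed
    also have "\<dots> = (\<Sum>p\<in>D' \<times> UNIV. x (fst p) (snd p) * \<delta> (fst p) (snd p))"
      by (rule sum.cong[OF refl]) (simp add: T(3) fun_sum_apply scf_def ix)
    also have "\<dots> = (\<Sum>p\<in>D' \<times> UNIV. if p = (h0, i0) then x h0 i0 else 0)"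
      by (rule sum.cong[OF refl]) (auto simp: \<delta>_def ee_def)
    also have "\<dots> = x h0 i0" using finD' by (simp add: D'_def)
    finally show "x h0 i0 = (\<Sum>a\<in>ix ` T. r (\<kappa> a) * L a x)" by simp
  qed
qed



lemma lin_S_slin: "\<phi> \<in> lin_S M \<Longrightarrow> slin (\<lambda>x. \<phi> x i)"
  unfolding lin_S_def cfg_linear_def slin_def by (auto dest: fun_cong)

lemma lin_S_local: "\<phi> \<in> lin_S M \<Longrightarrow> local_on M \<phi>"
  unfolding lin_S_def by blast

lemma lin_S_slocal: "\<phi> \<in> lin_S M \<Longrightarrow> local_on M (\<lambda>x. \<phi> x i)"
  unfolding local_on_def using local_onD[OF lin_S_local] by metis

lemma lin_S_add: "\<phi> \<in> lin_S M \<Longrightarrow> \<phi> (\<lambda>h i. y h i + z h i) i = \<phi> y i + \<phi> z i"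
  unfolding lin_S_def cfg_linear_def by (auto dest: fun_cong)

lemma lin_S_zero: "\<phi> \<in> lin_S M \<Longrightarrow> \<phi> (\<lambda>h i. 0) = (\<lambda>i. 0)"
  by (rule ext) (rule slin_zero[OF lin_S_slin])

lemma lnuca_ruleE:
  assumes "lnuca_rule s"
  obtains M F c where "finite M" "\<And>g. s g \<in> lin_S M" "finite F" "\<And>g. g \<notin> F \<Longrightarrow> s g = c"
  using assms unfolding lnuca_rule_def by blast

lemma sep_rule:
  fixes p :: "'g::group_add \<Rightarrow> ('g \<Rightarrow> 'n::finite \<Rightarrow> 'k::field) \<Rightarrow> ('n \<Rightarrow> 'k)"
  assumes "finite M" "\<And>g. p g \<in> lin_S M" "inj (sigma p)"
  shows "\<exists>A c. finite A \<and> (\<forall>x. x h0 i0 = (\<Sum>a\<in>A. c a * sigma p x (fst a) (snd a)))"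
proof -
  define L where "L a x = sigma p x (fst a) (snd a)" for a :: "'g \<times> 'n" and x
  define D where "D a = (\<lambda>m. fst a + m) ` M" for a :: "'g \<times> 'n"
  have "\<exists>A c. finite A \<and> (\<forall>x. x h0 i0 = (\<Sum>a\<in>A. c a * L a x))"
  proof (rule separation)
    fix a :: "'g \<times> 'n"
    show "slin (L a)" unfolding L_def sigma_def slin_def
      using lin_S_slin[OF assms(2), of "fst a" "snd a"] unfolding slin_def by simp
    show "finite (D a)" using assms(1) by (simp add: D_def)
    show "local_on (D a) (L a)" unfolding local_on_def L_def sigma_def
    proof (intro allI impI)
      fix y z :: "'g \<Rightarrow> 'n \<Rightarrow> 'k" assume yz: "\<forall>m\<in>D a. y m = z m"
      have "p (fst a) (\<lambda>h. y (fst a + h)) = p (fst a) (\<lambda>h. z (fst a + h))"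
        by (rule local_onD[OF lin_S_local[OF assms(2)]]) (use yz in \<open>auto simp: D_def\<close>)
      then show "p (fst a) (\<lambda>h. y (fst a + h)) (snd a) = p (fst a) (\<lambda>h. z (fst a + h)) (snd a)" by simp
    qed
  next
    fix x :: "'g \<Rightarrow> 'n \<Rightarrow> 'k" assume "\<And>a. L a x = 0"
    then have "sigma p x = sigma p (\<lambda>h i. 0)"
      by (auto simp: L_def sigma_def fun_eq_iff lin_S_zero[OF assms(2)])
    then show "x = (\<lambda>h i. 0)" using assms(3) by (simp add: inj_eq)
  qed
  then show ?thesis by (simp add: L_def)
qed

lemma finite_bad:
  assumes "finite E" "finite F"
  shows "finite {g::'g::group_add. \<exists>h\<in>E. - g + h \<in> F}"
proof -
  have "{g::'g. \<exists>h\<in>E. - g + h \<in> F} \<subseteq> (\<lambda>(h, f). h + - f) ` (E \<times> F)"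
  proof
    fix g assume "g \<in> {g::'g. \<exists>h\<in>E. - g + h \<in> F}"
    then obtain h where h: "h \<in> E" "- g + h \<in> F" by blast
    have "g = h + - (- g + h)" by (simp add: minus_add add.assoc)
    then show "g \<in> (\<lambda>(h, f). h + - f) ` (E \<times> F)" using h by force
  qed
  then show ?thesis using assms by (meson finite_SigmaI finite_imageI finite_subset)
qed

lemma const_in_closure:
  assumes inf: "infinite (UNIV :: 'g::group_add set)" and F: "finite F" and sF: "\<And>g. g \<notin> F \<Longrightarrow> s g = c"
  shows "(\<lambda>_. c) \<in> orbit_closure (s :: 'g \<Rightarrow> 'a)"
  unfolding orbit_closure_def
proof (intro CollectI allI impI)
  fix E :: "'g set" assume E: "finite E"
  obtain g where g: "g \<notin> {g::'g. \<exists>h\<in>E. - g + h \<in> F}"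
    using ex_new_if_finite[OF inf finite_bad[OF E F]] by blast
  show "\<exists>g. \<forall>h\<in>E. c = s (- g + h)" using g sF by blast
qed

lemma self_in_closure: "s \<in> orbit_closure (s :: 'g::group_add \<Rightarrow> 'a)"
  unfolding orbit_closure_def by (intro CollectI allI impI exI[of _ 0]) simp



lemma stably_inj_left_inverse:
  fixes \<tau> :: "('g::group_add \<Rightarrow> 'n::finite \<Rightarrow> 'k::field) \<Rightarrow> ('g \<Rightarrow> 'n \<Rightarrow> 'k)"
  assumes inf: "infinite (UNIV :: 'g set)" and si: "stably_injective \<tau>"
  shows "\<exists>r. lnuca_rule r \<and> (\<forall>x. sigma r (\<tau> x) = x)"
proof -
  obtain s where s: "lnuca_rule s" "\<tau> = sigma s" "\<forall>p\<in>orbit_closure s. inj (sigma p)"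
    using si unfolding stably_injective_def by blast
  obtain M F c where M: "finite M" "\<And>g. s g \<in> lin_S M" and F: "finite F" "\<And>g. g \<notin> F \<Longrightarrow> s g = c"
    using lnuca_ruleE[OF s(1)] by blast
  obtain g0 where "g0 \<notin> F" using ex_new_if_finite[OF inf F(1)] by blast
  then have cM: "c \<in> lin_S M" using M(2)[of g0] F(2)[of g0] by simp
  have "(\<lambda>_. c) \<in> orbit_closure s" by (rule const_in_closure[OF inf F(1)]) (rule F(2))
  then have injc: "inj (sigma (\<lambda>_::'g. c))" using s(3) by blast
  have injs: "inj (sigma s)" using s(3) self_in_closure by blast
  have "\<forall>i0. \<exists>A c'. finite A \<and> (\<forall>x. x 0 i0 = (\<Sum>a\<in>A. c' a * sigma (\<lambda>_. c) x (fst a) (snd a)))"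
    using sep_rule[OF M(1) _ injc] cM by blast
  then obtain A0 C0 where A0: "\<And>i0. finite (A0 i0)"
    "\<And>i0 x. x 0 i0 = (\<Sum>a\<in>A0 i0. C0 i0 a * sigma (\<lambda>_. c) x (fst a) (snd a))"
    by metis
  have "\<forall>h0 i0. \<exists>A c'. finite A \<and> (\<forall>x. x h0 i0 = (\<Sum>a\<in>A. c' a * sigma s x (fst a) (snd a)))"
    using sep_rule[OF M(1) M(2) injs] by blast
  then obtain A1 C1 where A1: "\<And>h0 i0. finite (A1 h0 i0)"
    "\<And>h0 i0 x. x h0 i0 = (\<Sum>a\<in>A1 h0 i0. C1 h0 i0 a * sigma s x (fst a) (snd a))"
    by metis
  have A0s: "x h i0 = (\<Sum>a\<in>A0 i0. C0 i0 a * sigma (\<lambda>_. c) x (h + fst a) (snd a))" for x h i0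
    using A0(2)[of "\<lambda>u. x (h + u)" i0] by (simp add: sigma_def add.assoc)
  define K where "K = {h. \<exists>i0. \<exists>a\<in>A0 i0. h + fst a \<in> F}"
  have finK: "finite K"
  proof -
    have "K \<subseteq> (\<Union>i0. \<Union>a\<in>A0 i0. (\<lambda>f. f + - fst a) ` F)"
    proof
      fix h assume "h \<in> K"
      then obtain i0 a where a: "a \<in> A0 i0" "h + fst a \<in> F" unfolding K_def by blast
      have "h = (h + fst a) + - fst a" by (simp add: add.assoc)
      then show "h \<in> (\<Union>i0. \<Union>a\<in>A0 i0. (\<lambda>f. f + - fst a) ` F)" using a by blast
    qed
    moreover have "finite (\<Union>i0. \<Union>a\<in>A0 i0. (\<lambda>f. f + - fst a) ` F)"
      using A0(1) F(1) by simp
    ultimately show ?thesis by (rule finite_subset)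
  qed
  define r :: "'g \<Rightarrow> ('g \<Rightarrow> 'n \<Rightarrow> 'k) \<Rightarrow> ('n \<Rightarrow> 'k)" where
    "r h y = (\<lambda>i0. if h \<in> K then (\<Sum>a\<in>A1 h i0. C1 h i0 a * y (- h + fst a) (snd a))
                    else (\<Sum>a\<in>A0 i0. C0 i0 a * y (fst a) (snd a)))" for h y
  define Mr where "Mr = (\<Union>i0. fst ` A0 i0) \<union> (\<Union>h\<in>K. \<Union>i0. (\<lambda>a. - h + fst a) ` A1 h i0)"
  have finMr: "finite Mr" unfolding Mr_def using A0(1) A1(1) finK by simp
  have rS: "r h \<in> lin_S Mr" for h
    unfolding lin_S_def cfg_linear_def local_on_def
  proof (intro CollectI conjI allI impI)
    fix y z :: "'g \<Rightarrow> 'n \<Rightarrow> 'k"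
    show "r h (\<lambda>h i. y h i + z h i) = (\<lambda>i. r h y i + r h z i)"
      by (simp add: r_def fun_eq_iff distrib_left sum.distrib)
    fix c'
    show "r h (\<lambda>h i. c' * y h i) = (\<lambda>i. c' * r h y i)"
      by (simp add: r_def fun_eq_iff sum_distrib_left mult.left_commute)
  next
    fix y z :: "'g \<Rightarrow> 'n \<Rightarrow> 'k" assume yz: "\<forall>m\<in>Mr. y m = z m"
    show "r h y = r h z"
    proof (cases "h \<in> K")
      case True
      have "\<And>i0 a. a \<in> A1 h i0 \<Longrightarrow> y (- h + fst a) = z (- h + fst a)"
        using yz True unfolding Mr_def by blast
      then show ?thesis using True by (auto simp: r_def fun_eq_iff intro!: sum.cong)
    next
      case False
      have "\<And>i0 a. a \<in> A0 i0 \<Longrightarrow> y (fst a) = z (fst a)"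
        using yz unfolding Mr_def by blast
      then show ?thesis using False by (auto simp: r_def fun_eq_iff intro!: sum.cong)
    qed
  qed
  have lr: "lnuca_rule r"
    unfolding lnuca_rule_def
  proof (intro exI conjI allI impI)
    show "finite Mr" by (rule finMr)
    show "r g \<in> lin_S Mr" for g by (rule rS)
    show "finite K" by (rule finK)
    show "r g = (\<lambda>y i0. \<Sum>a\<in>A0 i0. C0 i0 a * y (fst a) (snd a))" if "g \<notin> K" for g
      using that by (simp add: r_def fun_eq_iff)
  qed
  have inv: "sigma r (sigma s x) = x" for x
  proof (intro ext)
    fix h i0
    show "sigma r (sigma s x) h i0 = x h i0"
    proof (cases "h \<in> K")
      case True
      then have "sigma r (sigma s x) h i0 = (\<Sum>a\<in>A1 h i0. C1 h i0 a * sigma s x (fst a) (snd a))"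
        by (simp add: sigma_def[of r] r_def add.assoc[symmetric])
      then show ?thesis using A1(2)[of x h i0] by simp
    next
      case False
      have "sigma s x (h + fst a) = sigma (\<lambda>_. c) x (h + fst a)" if "a \<in> A0 i0" for a
        using that False F(2)[of "h + fst a"] unfolding K_def sigma_def by auto
      then have "sigma r (sigma s x) h i0 = (\<Sum>a\<in>A0 i0. C0 i0 a * sigma (\<lambda>_. c) x (h + fst a) (snd a))"
        using False by (simp add: sigma_def[of r] r_def)
      then show ?thesis using A0s[of x h i0] by simp
    qed
  qed
  show ?thesis using lr inv s(2) by blast
qed

lemma ii_to_i:
  assumes inf: "infinite (UNIV :: 'g::group_add set)"
    and df: "LNUCA_directly_finite TYPE('g) TYPE('n::finite) TYPE('k::field)"
  shows "\<forall>\<tau> \<in> (LNUCA_c :: (('g \<Rightarrow> 'n \<Rightarrow> 'k) \<Rightarrow> _) set). stably_injective \<tau> \<longrightarrow> surj \<tau>"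
proof (intro ballI impI)
  fix \<tau> :: "('g \<Rightarrow> 'n \<Rightarrow> 'k) \<Rightarrow> _" assume t: "\<tau> \<in> LNUCA_c" "stably_injective \<tau>"
  obtain r where r: "lnuca_rule r" "\<forall>x. sigma r (\<tau> x) = x"
    using stably_inj_left_inverse[OF inf t(2)] by blast
  have rL: "sigma r \<in> LNUCA_c" using r(1) unfolding LNUCA_c_def by blast
  have "sigma r \<circ> \<tau> = id" using r(2) by (simp add: fun_eq_iff)
  then have "\<tau> \<circ> sigma r = id" using df rL t(1) unfolding LNUCA_directly_finite_def by blast
  then show "surj \<tau>" by (metis comp_apply id_apply surjI)
qed

lemma i_to_ii:
  assumes h: "\<forall>\<tau> \<in> (LNUCA_c :: (('g::group_add \<Rightarrow> 'n::finite \<Rightarrow> 'k::field) \<Rightarrow> _) set). stably_injective \<tau> \<longrightarrow> surj \<tau>"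
  shows "LNUCA_directly_finite TYPE('g) TYPE('n) TYPE('k)"
  unfolding LNUCA_directly_finite_def
proof (intro ballI impI)
  fix a b :: "('g \<Rightarrow> 'n \<Rightarrow> 'k) \<Rightarrow> _"
  assume a: "a \<in> LNUCA_c" and b: "b \<in> LNUCA_c" and ab: "a \<circ> b = id"
  obtain sa where sa: "lnuca_rule sa" "a = sigma sa" using a unfolding LNUCA_c_def by blast
  obtain sb where sb: "lnuca_rule sb" "b = sigma sb" using b unfolding LNUCA_c_def by blast
  obtain Ma Fa ca where Ma: "finite Ma" "\<And>g. sa g \<in> lin_S Ma"
    using lnuca_ruleE[OF sa(1)] by metis
  have abx: "sigma sa (sigma sb y) = y" for y using ab sa(2) sb(2) by (metis comp_apply id_apply)
  have "stably_injective b"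
    unfolding stably_injective_def
  proof (intro exI conjI ballI)
    show "lnuca_rule sb" "b = sigma sb" using sb by auto
    fix p assume p: "p \<in> orbit_closure sb"
    show "inj (sigma p)"
    proof (rule injI)
      fix x x' assume xx: "sigma p x = sigma p x'"
      have xx': "p g (\<lambda>h. x (g + h)) = p g (\<lambda>h. x' (g + h))" for g
        using fun_cong[OF xx, of g] by (simp add: sigma_def)
      show "x = x'"
      proof (rule ext)
        fix g
        obtain g0 where g0: "\<forall>h\<in>(\<lambda>m. g + m) ` Ma. p h = sb (- g0 + h)"
          using p Ma(1) unfolding orbit_closure_def by blast
        define y where "y = (\<lambda>u. x (g0 + u))"
        define y' where "y' = (\<lambda>u. x' (g0 + u))"
        have ey: "sigma sb y (- g0 + g + m) = sigma p x (g + m)" if "m \<in> Ma" for m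
          using g0 that by (simp add: sigma_def y_def add.assoc)
        have ey': "sigma sb y' (- g0 + g + m) = sigma p x' (g + m)" if "m \<in> Ma" for m
          using g0 that by (simp add: sigma_def y'_def add.assoc)
        have "sigma sa (sigma sb y) (- g0 + g) = sigma sa (sigma sb y') (- g0 + g)"
          unfolding sigma_def
          by (rule local_onD[OF lin_S_local[OF Ma(2)]]) (simp add: ey[unfolded sigma_def] ey'[unfolded sigma_def] xx')
        then have "y (- g0 + g) = y' (- g0 + g)" using abx by simp
        then show "x g = x' g" by (simp add: y_def y'_def add.assoc[symmetric])
      qed
    qed
  qed
  then have "surj b" using h b by blast
  show "b \<circ> a = id"
  proof (rule ext)
    fix y
    obtain x where "y = b x" using \<open>surj b\<close> by (metis surjD)
    then show "(b \<circ> a) y = id y" using ab by (metis comp_apply id_apply)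
  qed
qed



type_synonym ('n, 'g, 'k) mat = "'n \<Rightarrow> 'n \<Rightarrow> ('g, 'k) D1"

definition gam :: "('n, 'g, 'k::field) mat \<Rightarrow> 'g \<Rightarrow> 'n \<Rightarrow> 'n \<Rightarrow> 'g \<Rightarrow> 'k" where
  "gam A g i j t = fst (A i j) t + snd (A i j) g t"

definition PsiR :: "('n::finite, 'g::group_add, 'k::field) mat \<Rightarrow> 'g \<Rightarrow> ('g \<Rightarrow> 'n \<Rightarrow> 'k) \<Rightarrow> ('n \<Rightarrow> 'k)" where
  "PsiR A g y = (\<lambda>i. \<Sum>j\<in>UNIV. Sum_any (\<lambda>t. gam A g i j t * y t j))"

definition Psi :: "('n::finite, 'g::group_add, 'k::field) mat \<Rightarrow> ('g \<Rightarrow> 'n \<Rightarrow> 'k) \<Rightarrow> ('g \<Rightarrow> 'n \<Rightarrow> 'k)" where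
  "Psi A = sigma (PsiR A)"

definition carrierM :: "('n, 'g, 'k::field) mat \<Rightarrow> bool" where
  "carrierM A \<longleftrightarrow> (\<forall>i j. A i j \<in> D1_carrier)"

definition supp_ok :: "('n, 'g, 'k::field) mat \<Rightarrow> 'g set \<Rightarrow> 'g set \<Rightarrow> bool" where
  "supp_ok A S F \<longleftrightarrow> finite S \<and> finite F \<and> (\<forall>i j t. fst (A i j) t \<noteq> 0 \<longrightarrow> t \<in> S)
     \<and> (\<forall>i j g t. snd (A i j) g t \<noteq> 0 \<longrightarrow> t \<in> S \<and> g \<in> F)"

lemma carrier_supp:
  assumes "carrierM (A :: ('n::finite, 'g, 'k::field) mat)"
  shows "\<exists>S F. supp_ok A S F"
proof -
  define F where "F = (\<Union>i j. {g. snd (A i j) g \<noteq> (\<lambda>_. 0)})"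
  define S where "S = (\<Union>i j. {t. fst (A i j) t \<noteq> 0} \<union> (\<Union>g\<in>F. {t. snd (A i j) g t \<noteq> 0}))"
  have c: "fin_supp (fst (A i j))" "finite {g. snd (A i j) g \<noteq> (\<lambda>_. 0)}" "fin_supp (snd (A i j) g)" for i j g
    using assms unfolding carrierM_def D1_carrier_def by (auto simp: mem_Times_iff)
  have fF: "finite F" unfolding F_def using c(2) by simp
  have fS: "finite S" unfolding S_def using c(1,3) fF by (simp add: fin_supp_def)
  have "supp_ok A S F" unfolding supp_ok_def
  proof (intro conjI allI impI fS fF)
    fix i j t assume "fst (A i j) t \<noteq> 0" then show "t \<in> S" unfolding S_def by blast
  next
    fix i j g t assume h: "snd (A i j) g t \<noteq> 0"
    then have "snd (A i j) g \<noteq> (\<lambda>_. 0)" by auto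
    then have gF: "g \<in> F" unfolding F_def by blast
    then show "t \<in> S" using h unfolding S_def by blast
    show "g \<in> F" by (rule gF)
  qed
  then show ?thesis by blast
qed

lemma supp_gam: "supp_ok A S F \<Longrightarrow> gam A g i j t \<noteq> 0 \<Longrightarrow> t \<in> S"
  unfolding supp_ok_def gam_def by (metis add.right_neutral add_0)

lemma supp_snd: "supp_ok A S F \<Longrightarrow> g \<notin> F \<Longrightarrow> snd (A i j) g t = 0"
  unfolding supp_ok_def by blast

lemma Psi_sum:
  assumes "finite S" "\<forall>g i j t. gam A g i j t \<noteq> 0 \<longrightarrow> t \<in> S"
  shows "Psi A x g i = (\<Sum>j\<in>UNIV. \<Sum>t\<in>S. gam A g i j t * x (g + t) j)"
  unfolding Psi_def sigma_def PsiR_def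
  by (rule sum.cong[OF refl], rule Sum_any.expand_superset) (use assms in auto)

lemma PsiR_sum:
  assumes "finite S" "\<forall>g i j t. gam A g i j t \<noteq> 0 \<longrightarrow> t \<in> S"
  shows "PsiR A g y i = (\<Sum>j\<in>UNIV. \<Sum>t\<in>S. gam A g i j t * y t j)"
  unfolding PsiR_def
  by (rule sum.cong[OF refl], rule Sum_any.expand_superset) (use assms in auto)

lemma Psi_eval:
  "Psi (C :: ('n::finite, 'g::group_add, 'k::field) mat) (ee (g + t) j) g i = gam C g i j t"
proof -
  have "Psi C (ee (g + t) j) g i = (\<Sum>j'\<in>UNIV. Sum_any (\<lambda>t'. if t' = t then (if j' = j then gam C g i j' t' else 0) else 0))"
    unfolding Psi_def sigma_def PsiR_def
    by (rule sum.cong[OF refl], rule Sum_any.cong) (auto simp: ee_def)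
  also have "\<dots> = (\<Sum>j'\<in>UNIV. if j' = j then gam C g i j' t else 0)"
    by simp
  also have "\<dots> = gam C g i j t" by simp
  finally show ?thesis .
qed

lemma Psi_one: "Psi (D1_mat_one :: ('n::finite, 'g::group_add, 'k::field) mat) = id"
proof (intro ext)
  fix x :: "'g \<Rightarrow> 'n \<Rightarrow> 'k" and g i
  have e: "(\<lambda>t. gam (D1_mat_one :: ('n, 'g, 'k) mat) g i j t * x (g + t) j) = (\<lambda>t. if t = 0 then (if j = i then x g j else 0) else 0)" for j
    by (auto simp: fun_eq_iff gam_def D1_mat_one_def D1_one_def D1_zero_def)
  have "Psi (D1_mat_one :: ('n, 'g, 'k) mat) x g i = (\<Sum>j\<in>UNIV. Sum_any (\<lambda>t::'g. if t = 0 then (if j = i then x g j else 0) else 0))"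
    unfolding Psi_def sigma_def PsiR_def e by simp
  also have "\<dots> = x g i" by simp
  finally show "Psi D1_mat_one x g i = id x g i" by simp
qed

lemma D1_mult_fst: "fst (D1_mult x y) h = Sum_any (\<lambda>t. fst x t * fst y (- t + h))"
  by (simp add: D1_mult_def case_prod_beta gr_mult_def)

lemma D1_mult_snd: "snd (D1_mult x y) g h = Sum_any (\<lambda>t. fst x t * snd y (g + t) (- t + h))
          + Sum_any (\<lambda>t. snd x g t * fst y (- t + h))
          + Sum_any (\<lambda>t. snd x g t * snd y (g + t) (- t + h))"
  by (simp add: D1_mult_def case_prod_beta)

lemma gam_mult:
  assumes sA: "supp_ok A SA FA"
  shows "gam (D1_mat_mult A B) g i j h = (\<Sum>l\<in>UNIV. \<Sum>t\<in>SA. gam A g i l t * gam B (g + t) l j (- t + h))"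
proof -
  have fin: "finite SA" using sA unfolding supp_ok_def by blast
  have s1: "fst (A i l) t \<noteq> 0 \<Longrightarrow> t \<in> SA" for l t using sA unfolding supp_ok_def by blast
  have s2: "snd (A i l) g t \<noteq> 0 \<Longrightarrow> t \<in> SA" for l t using sA unfolding supp_ok_def by blast
  have per: "fst (D1_mult (A i l) (B l j)) h + snd (D1_mult (A i l) (B l j)) g h
      = (\<Sum>t\<in>SA. gam A g i l t * gam B (g + t) l j (- t + h))" for l
  proof -
    let ?a1 = "fst (A i l)" and ?b1 = "snd (A i l)" and ?a2 = "fst (B l j)" and ?b2 = "snd (B l j)"
    have e1: "Sum_any (\<lambda>t. ?a1 t * ?a2 (- t + h)) = (\<Sum>t\<in>SA. ?a1 t * ?a2 (- t + h))"
      by (rule Sum_any.expand_superset[OF fin]) (use s1 in auto)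
    have e2: "Sum_any (\<lambda>t. ?a1 t * ?b2 (g + t) (- t + h)) = (\<Sum>t\<in>SA. ?a1 t * ?b2 (g + t) (- t + h))"
      by (rule Sum_any.expand_superset[OF fin]) (use s1 in auto)
    have e3: "Sum_any (\<lambda>t. ?b1 g t * ?a2 (- t + h)) = (\<Sum>t\<in>SA. ?b1 g t * ?a2 (- t + h))"
      by (rule Sum_any.expand_superset[OF fin]) (use s2 in auto)
    have e4: "Sum_any (\<lambda>t. ?b1 g t * ?b2 (g + t) (- t + h)) = (\<Sum>t\<in>SA. ?b1 g t * ?b2 (g + t) (- t + h))"
      by (rule Sum_any.expand_superset[OF fin]) (use s2 in auto)
    show ?thesis
      unfolding D1_mult_fst D1_mult_snd e1 e2 e3 e4 gam_def
      by (simp add: sum.distrib[symmetric] algebra_simps)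
  qed
  have "gam (D1_mat_mult A B) g i j h = (\<Sum>l\<in>UNIV. fst (D1_mult (A i l) (B l j)) h + snd (D1_mult (A i l) (B l j)) g h)"
    by (simp add: gam_def D1_mat_mult_def sum.distrib)
  also have "\<dots> = (\<Sum>l\<in>UNIV. \<Sum>t\<in>SA. gam A g i l t * gam B (g + t) l j (- t + h))"
    by (simp add: per)
  finally show ?thesis .
qed

lemma swap4:
  "(\<Sum>j\<in>J. \<Sum>h\<in>H. \<Sum>l\<in>L. \<Sum>t\<in>T. f j h l t) = (\<Sum>l\<in>L. \<Sum>t\<in>T. \<Sum>j\<in>J. \<Sum>h\<in>H. f j h l t)"
proof -
  have "(\<Sum>j\<in>J. \<Sum>h\<in>H. \<Sum>l\<in>L. \<Sum>t\<in>T. f j h l t) = (\<Sum>j\<in>J. \<Sum>l\<in>L. \<Sum>h\<in>H. \<Sum>t\<in>T. f j h l t)"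
    by (rule sum.cong[OF refl]) (rule sum.swap)
  also have "\<dots> = (\<Sum>l\<in>L. \<Sum>j\<in>J. \<Sum>h\<in>H. \<Sum>t\<in>T. f j h l t)"
    by (rule sum.swap)
  also have "\<dots> = (\<Sum>l\<in>L. \<Sum>j\<in>J. \<Sum>t\<in>T. \<Sum>h\<in>H. f j h l t)"
    by (rule sum.cong[OF refl], rule sum.cong[OF refl]) (rule sum.swap)
  also have "\<dots> = (\<Sum>l\<in>L. \<Sum>t\<in>T. \<Sum>j\<in>J. \<Sum>h\<in>H. f j h l t)"
    by (rule sum.cong[OF refl]) (rule sum.swap)
  finally show ?thesis .
qed

lemma Psi_mult:
  assumes sA: "supp_ok A SA FA" and sB: "supp_ok B SB FB"
  shows "Psi (D1_mat_mult A B) = Psi A \<circ> Psi (B :: ('n::finite, 'g::group_add, 'k::field) mat)"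
proof (intro ext)
  fix x :: "'g \<Rightarrow> 'n \<Rightarrow> 'k" and g i
  have fA: "finite SA" using sA unfolding supp_ok_def by blast
  have fB: "finite SB" using sB unfolding supp_ok_def by blast
  define H where "H = (\<lambda>p. fst p + snd p) ` (SA \<times> SB)"
  have fH: "finite H" using fA fB by (simp add: H_def)
  have gB0: "gam B g' l j u \<noteq> 0 \<Longrightarrow> u \<in> SB" for g' l j u using supp_gam[OF sB] by blast
  have gB0': "\<forall>g' l j u. gam B g' l j u \<noteq> 0 \<longrightarrow> u \<in> SB" using gB0 by blast
  have gA0': "\<forall>g' l j u. gam A g' l j u \<noteq> 0 \<longrightarrow> u \<in> SA" using supp_gam[OF sA] by blast
  have suppAB: "\<forall>g' i' j h. gam (D1_mat_mult A B) g' i' j h \<noteq> 0 \<longrightarrow> h \<in> H"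
  proof (intro allI impI)
    fix g' i' j h assume that: "gam (D1_mat_mult A B) g' i' j h \<noteq> 0"
    from that obtain l t where t: "t \<in> SA" "gam A g' i' l t * gam B (g' + t) l j (- t + h) \<noteq> 0"
      unfolding gam_mult[OF sA] by (meson sum.not_neutral_contains_not_neutral)
    then have "- t + h \<in> SB" using gB0 by force
    moreover have "h = t + (- t + h)" by (simp add: add.assoc[symmetric])
    ultimately show "h \<in> H" using t(1) unfolding H_def by force
  qed
  have inner: "(\<Sum>h\<in>H. gam B (g + t) l j (- t + h) * x (g + h) j)
      = (\<Sum>u\<in>SB. gam B (g + t) l j u * x (g + t + u) j)" if t: "t \<in> SA" for t l j
  proof -
    have injt: "inj_on (\<lambda>u. t + u) SB" by (simp add: inj_on_def)
    have sub: "(\<lambda>u. t + u) ` SB \<subseteq> H" using t unfolding H_def by force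
    have "(\<Sum>u\<in>SB. gam B (g + t) l j u * x (g + t + u) j)
        = (\<Sum>h\<in>(\<lambda>u. t + u) ` SB. gam B (g + t) l j (- t + h) * x (g + h) j)"
      by (simp add: sum.reindex[OF injt] add.assoc)
    also have "\<dots> = (\<Sum>h\<in>H. gam B (g + t) l j (- t + h) * x (g + h) j)"
    proof (rule sum.mono_neutral_left[OF fH sub])
      show "\<forall>h\<in>H - (\<lambda>u. t + u) ` SB. gam B (g + t) l j (- t + h) * x (g + h) j = 0"
      proof
        fix h assume h: "h \<in> H - (\<lambda>u. t + u) ` SB"
        have "gam B (g + t) l j (- t + h) = 0"
        proof (rule ccontr)
          assume "gam B (g + t) l j (- t + h) \<noteq> 0"
          then have "- t + h \<in> SB" by (rule gB0)
          moreover have "h = t + (- t + h)" by (simp add: add.assoc[symmetric])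
          ultimately show False using h by blast
        qed
        then show "gam B (g + t) l j (- t + h) * x (g + h) j = 0" by simp
      qed
    qed
    finally show ?thesis by simp
  qed
  have "Psi (D1_mat_mult A B) x g i = (\<Sum>j\<in>UNIV. \<Sum>h\<in>H. gam (D1_mat_mult A B) g i j h * x (g + h) j)"
    by (rule Psi_sum[OF fH suppAB])
  also have "\<dots> = (\<Sum>j\<in>UNIV. \<Sum>h\<in>H. \<Sum>l\<in>UNIV. \<Sum>t\<in>SA. gam A g i l t * (gam B (g + t) l j (- t + h) * x (g + h) j))"
    by (simp only: gam_mult[OF sA] sum_distrib_right mult.assoc)
  also have "\<dots> = (\<Sum>l\<in>UNIV. \<Sum>t\<in>SA. \<Sum>j\<in>UNIV. \<Sum>h\<in>H. gam A g i l t * (gam B (g + t) l j (- t + h) * x (g + h) j))"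
    by (rule swap4)
  also have "\<dots> = (\<Sum>l\<in>UNIV. \<Sum>t\<in>SA. gam A g i l t * (\<Sum>j\<in>UNIV. \<Sum>h\<in>H. gam B (g + t) l j (- t + h) * x (g + h) j))"
    by (simp only: sum_distrib_left)
  also have "\<dots> = (\<Sum>l\<in>UNIV. \<Sum>t\<in>SA. gam A g i l t * (\<Sum>j\<in>UNIV. \<Sum>u\<in>SB. gam B (g + t) l j u * x (g + t + u) j))"
    by (rule sum.cong[OF refl], rule sum.cong[OF refl]) (simp add: inner)
  also have "\<dots> = (\<Sum>l\<in>UNIV. \<Sum>t\<in>SA. gam A g i l t * Psi B x (g + t) l)"
    by (simp only: Psi_sum[OF fB gB0'])
  also have "\<dots> = Psi A (Psi B x) g i"
    by (simp only: Psi_sum[OF fA gA0'])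
  finally show "Psi (D1_mat_mult A B) x g i = (Psi A \<circ> Psi B) x g i" by simp
qed

lemma Psi_in:
  assumes sA: "supp_ok (A :: ('n::finite, 'g::group_add, 'k::field) mat) S F"
  shows "Psi A \<in> LNUCA_c"
proof -
  have fS: "finite S" and fF: "finite F" using sA unfolding supp_ok_def by auto
  have g0: "\<forall>g i j t. gam A g i j t \<noteq> 0 \<longrightarrow> t \<in> S" using supp_gam[OF sA] by blast
  have lr: "lnuca_rule (PsiR A)"
    unfolding lnuca_rule_def
  proof (intro exI conjI allI impI)
    show "finite S" by (rule fS)
    show "finite F" by (rule fF)
    fix g
    show "PsiR A g \<in> lin_S S"
      unfolding lin_S_def cfg_linear_def local_on_def
    proof (intro CollectI conjI allI impI)
      fix y z :: "'g \<Rightarrow> 'n \<Rightarrow> 'k"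
      show "PsiR A g (\<lambda>h i. y h i + z h i) = (\<lambda>i. PsiR A g y i + PsiR A g z i)"
        by (simp add: PsiR_sum[OF fS g0] fun_eq_iff distrib_left sum.distrib)
      fix c
      show "PsiR A g (\<lambda>h i. c * y h i) = (\<lambda>i. c * PsiR A g y i)"
        by (simp add: PsiR_sum[OF fS g0] fun_eq_iff sum_distrib_left mult.left_commute)
    next
      fix y z :: "'g \<Rightarrow> 'n \<Rightarrow> 'k" assume "\<forall>m\<in>S. y m = z m"
      then show "PsiR A g y = PsiR A g z"
        by (simp add: PsiR_sum[OF fS g0] fun_eq_iff)
    qed
  next
    fix g assume "g \<notin> F"
    then show "PsiR A g = (\<lambda>y i. \<Sum>j\<in>UNIV. Sum_any (\<lambda>t. fst (A i j) t * y t j))"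
      using supp_snd[OF sA] by (simp add: PsiR_def gam_def fun_eq_iff)
  qed
  then show ?thesis unfolding LNUCA_c_def Psi_def by blast
qed

lemma Psi_surj:
  assumes inf: "infinite (UNIV :: 'g::group_add set)"
    and f: "f \<in> (LNUCA_c :: (('g \<Rightarrow> 'n::finite \<Rightarrow> 'k::field) \<Rightarrow> _) set)"
  shows "\<exists>A. carrierM A \<and> Psi A = f"
proof -
  obtain s where s: "lnuca_rule s" "f = sigma s" using f unfolding LNUCA_c_def by blast
  obtain M F c where M: "finite M" "\<And>g. s g \<in> lin_S M" and F: "finite F" "\<And>g. g \<notin> F \<Longrightarrow> s g = c"
    using lnuca_ruleE[OF s(1)] by blast
  obtain g0 where "g0 \<notin> F" using ex_new_if_finite[OF inf F(1)] by blast
  then have cM: "c \<in> lin_S M" using M(2)[of g0] F(2)[of g0] by simp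
  define A :: "('n, 'g, 'k) mat" where
    "A i j = ((\<lambda>t. c (ee t j) i), (\<lambda>g t. s g (ee t j) i - c (ee t j) i))" for i j
  have out: "\<phi> (ee t j) i = 0" if "\<phi> \<in> lin_S M" "t \<notin> M" for \<phi> t j i
    by (rule slin_ee_out[OF lin_S_slin[OF that(1)] lin_S_slocal[OF that(1)] that(2)])
  have car: "carrierM A"
    unfolding carrierM_def D1_carrier_def
  proof (intro allI)
    fix i j
    have "fin_supp (fst (A i j))"
      unfolding fin_supp_def A_def using out[OF cM] by (auto intro: finite_subset[OF _ M(1)])
    moreover have "finite {g. snd (A i j) g \<noteq> (\<lambda>_. 0)}"
    proof (rule finite_subset[OF _ F(1)])
      show "{g. snd (A i j) g \<noteq> (\<lambda>_. 0)} \<subseteq> F"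
      proof
        fix g assume "g \<in> {g. snd (A i j) g \<noteq> (\<lambda>_. 0)}"
        then show "g \<in> F" using F(2)[of g] by (auto simp: A_def)
      qed
    qed
    moreover have "fin_supp (snd (A i j) g)" for g
    proof -
      have "{t. snd (A i j) g t \<noteq> 0} \<subseteq> M"
      proof
        fix t assume "t \<in> {t. snd (A i j) g t \<noteq> 0}"
        then show "t \<in> M" by (rule contrapos_pp) (simp add: A_def out[OF cM] out[OF M(2)])
      qed
      then show ?thesis unfolding fin_supp_def by (rule finite_subset) (rule M(1))
    qed
    ultimately show "A i j \<in> {(a, b). fin_supp a \<and> finite {g. b g \<noteq> (\<lambda>_. 0)} \<and> (\<forall>g. fin_supp (b g))}"
      by (auto simp: A_def)
  qed
  have gA: "gam A g i j t = s g (ee t j) i" for g i j t by (simp add: gam_def A_def)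
  have g0: "\<forall>g i j t. gam A g i j t \<noteq> 0 \<longrightarrow> t \<in> M" using out[OF M(2)] gA by metis
  have "Psi A = sigma s"
  proof (intro ext)
    fix x g i
    have "Psi A x g i = (\<Sum>j\<in>UNIV. \<Sum>t\<in>M. s g (ee t j) i * x (g + t) j)"
      using Psi_sum[OF M(1) g0] gA by simp
    also have "\<dots> = (\<Sum>p\<in>M \<times> UNIV. (\<lambda>h. x (g + h)) (fst p) (snd p) * s g (ee (fst p) (snd p)) i)"
    proof -
      have "(\<Sum>j\<in>UNIV. \<Sum>t\<in>M. s g (ee t j) i * x (g + t) j) = (\<Sum>t\<in>M. \<Sum>j\<in>UNIV. s g (ee t j) i * x (g + t) j)"
        by (rule sum.swap)
      also have "\<dots> = (\<Sum>p\<in>M \<times> UNIV. s g (ee (fst p) (snd p)) i * x (g + fst p) (snd p))"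
        by (simp add: sum.cartesian_product case_prod_beta)
      finally show ?thesis by (simp add: mult.commute)
    qed
    also have "\<dots> = s g (\<lambda>h. x (g + h)) i"
      by (rule slin_rep[OF lin_S_slin[OF M(2)] lin_S_slocal[OF M(2)] M(1), symmetric])
    finally show "Psi A x g i = sigma s x g i" by (simp add: sigma_def)
  qed
  then show ?thesis using car s(2) by blast
qed

lemma Psi_inj_one:
  assumes inf: "infinite (UNIV :: 'g::group_add set)"
    and sA: "supp_ok (A :: ('n::finite, 'g, 'k::field) mat) SA FA" and sB: "supp_ok B SB FB"
    and eq: "Psi (D1_mat_mult A B) = Psi D1_mat_one"
  shows "D1_mat_mult A B = D1_mat_one"
proof -
  let ?C = "D1_mat_mult A B"
  have geq: "gam ?C g i j t = gam D1_mat_one g i j t" for g i j t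
    using Psi_eval[of ?C g t j i] Psi_eval[of "D1_mat_one :: ('n, 'g, 'k) mat" g t j i] eq by simp
  have fA: "finite SA" "finite FA" using sA unfolding supp_ok_def by auto
  have fB: "finite SB" "finite FB" using sB unfolding supp_ok_def by auto
  define Bad where "Bad = FA \<union> (\<lambda>p. fst p + - snd p) ` (FB \<times> SA)"
  have "finite Bad" unfolding Bad_def using fA fB by simp
  then obtain g0 where g0: "g0 \<notin> Bad" using ex_new_if_finite[OF inf] by blast
  have sndC: "snd (?C i j) g0 h = 0" for i j h
  proof -
    have z: "snd (D1_mult (A i l) (B l j)) g0 h = 0" for l
    proof -
      have z1: "fst (A i l) t * snd (B l j) (g0 + t) (- t + h) = 0" for t
      proof (cases "fst (A i l) t = 0")
        case False
        then have t: "t \<in> SA" using sA unfolding supp_ok_def by blast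
        have "g0 + t \<notin> FB"
        proof
          assume "g0 + t \<in> FB"
          moreover have "g0 = (g0 + t) + - t" by (simp add: add.assoc)
          ultimately have "g0 \<in> Bad" using t unfolding Bad_def by force
          then show False using g0 by blast
        qed
        then show ?thesis using supp_snd[OF sB] by simp
      qed simp
      have z2: "snd (A i l) g0 t = 0" for t
        using g0 supp_snd[OF sA] unfolding Bad_def by blast
      show ?thesis unfolding D1_mult_snd by (simp add: z1 z2)
    qed
    show ?thesis by (simp add: D1_mat_mult_def z)
  qed
  have fstC: "fst (?C i j) h = fst (D1_mat_one i j) h" for i j h
    using geq[of g0 i j h] sndC[of i j h]
    by (simp add: gam_def D1_mat_one_def D1_one_def D1_zero_def)
  have sndC': "snd (?C i j) g h = snd (D1_mat_one i j) g h" for i j g h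
    using geq[of g i j h] fstC[of i j h]
    by (simp add: gam_def D1_mat_one_def D1_one_def D1_zero_def)
  show ?thesis
    by (intro ext prod_eqI) (simp_all add: fstC sndC')
qed

lemma carrier_ok: "carrierM A \<Longrightarrow> \<exists>S F. supp_ok (A :: ('n::finite, 'g, 'k::field) mat) S F"
  by (rule carrier_supp)

lemma ii_to_iii:
  assumes inf: "infinite (UNIV :: 'g::group_add set)"
    and df: "LNUCA_directly_finite TYPE('g) TYPE('n::finite) TYPE('k::field)"
  shows "D1_mat_directly_finite TYPE('g) TYPE('n) TYPE('k)"
  unfolding D1_mat_directly_finite_def
proof (intro allI impI)
  fix A B :: "('n, 'g, 'k) mat"
  assume a: "\<forall>i j. A i j \<in> D1_carrier" and b: "\<forall>i j. B i j \<in> D1_carrier" and ab: "D1_mat_mult A B = D1_mat_one"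
  obtain SA FA where sA: "supp_ok A SA FA" using carrier_supp a unfolding carrierM_def by blast
  obtain SB FB where sB: "supp_ok B SB FB" using carrier_supp b unfolding carrierM_def by blast
  have "Psi A \<circ> Psi B = id" using Psi_mult[OF sA sB] ab Psi_one by metis
  then have "Psi B \<circ> Psi A = id"
    using df Psi_in[OF sA] Psi_in[OF sB] unfolding LNUCA_directly_finite_def by blast
  then have "Psi (D1_mat_mult B A) = Psi D1_mat_one" using Psi_mult[OF sB sA] Psi_one by metis
  then show "D1_mat_mult B A = D1_mat_one" by (rule Psi_inj_one[OF inf sB sA])
qed

lemma iii_to_ii:
  assumes inf: "infinite (UNIV :: 'g::group_add set)"
    and df: "D1_mat_directly_finite TYPE('g) TYPE('n::finite) TYPE('k::field)"
  shows "LNUCA_directly_finite TYPE('g) TYPE('n) TYPE('k)"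
  unfolding LNUCA_directly_finite_def
proof (intro ballI impI)
  fix a b :: "('g \<Rightarrow> 'n \<Rightarrow> 'k) \<Rightarrow> _"
  assume a: "a \<in> LNUCA_c" and b: "b \<in> LNUCA_c" and ab: "a \<circ> b = id"
  obtain A where A: "carrierM A" "Psi A = a" using Psi_surj[OF inf a] by blast
  obtain B where B: "carrierM B" "Psi B = b" using Psi_surj[OF inf b] by blast
  obtain SA FA where sA: "supp_ok A SA FA" using carrier_supp A(1) by blast
  obtain SB FB where sB: "supp_ok B SB FB" using carrier_supp B(1) by blast
  have "Psi (D1_mat_mult A B) = Psi D1_mat_one" using Psi_mult[OF sA sB] ab Psi_one A(2) B(2) by metis
  then have "D1_mat_mult A B = D1_mat_one" by (rule Psi_inj_one[OF inf sA sB])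
  then have "D1_mat_mult B A = D1_mat_one"
    using df A(1) B(1) unfolding D1_mat_directly_finite_def carrierM_def by blast
  then show "b \<circ> a = id" using Psi_mult[OF sB sA] Psi_one A(2) B(2) by metis
qed


theorem theorem7p2:
  assumes "infinite (UNIV :: 'g::group_add set)"
  shows "((\<forall>\<tau> \<in> (LNUCA_c :: (('g \<Rightarrow> 'n::finite \<Rightarrow> 'k::field) \<Rightarrow> _) set).
              stably_injective \<tau> \<longrightarrow> surj \<tau>)
           \<longleftrightarrow> LNUCA_directly_finite TYPE('g) TYPE('n) TYPE('k))
       \<and> (LNUCA_directly_finite TYPE('g) TYPE('n) TYPE('k)
           \<longleftrightarrow> D1_mat_directly_finite TYPE('g) TYPE('n) TYPE('k))"
  using i_to_ii ii_to_i[OF assms] ii_to_iii[OF assms] iii_to_ii[OF assms] by blast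

end
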